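(* Let $\phi_1,\ldots,\phi_k\in L^1(\mathbb{R}_+)$ with $\int_0^\infty\phi_i(x)\,dx = 1$ for each $1\le i\le k$, such that the closed ideal of $L^1(\mathbb{R})$ generated by $\tilde\phi_1,\ldots,\tilde\phi_k$ is $L^1(\mathbb{R})$. Then for $f\in L^\infty(\mathbb{R}_+)$ and a constant $\alpha$, the statement "$S_{\phi_i}(f)=\alpha$ for every $1\le i\le k$" is equivalent to "$K(f)=\alpha$".
   Context: $\mathbb{R}_+=[0,\infty)$; functions are complex-valued. $S_\phi(f) = \lim_{x\to\infty}\int_0^x f(t)\phi(x-t)\,dt$ (the statement $S_\phi(f)=\alpha$ means this limit exists and equals $\alpha$). $K(f)=\alpha$ means that $f(\cdot+s)$ converges as $s\to\infty$ to the constant $\alpha$ in the weak* topology of $L^\infty(\mathbb{R}_+)=L^1(\mathbb{R}_+)^*$. $\tilde\phi_i$ is $\phi_i$ extended by $0$ on $(-\infty,0)$; $L^1(\mathbb{R})$ is the convolution Banach algebra. *)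

theory Defs
  imports "HOL-Analysis.Analysis"
begin

definition conv_R :: "(real \<Rightarrow> complex) \<Rightarrow> (real \<Rightarrow> complex) \<Rightarrow> real \<Rightarrow> complex" where
  "conv_R g u = (\<lambda>x. LINT t|lborel. g t * u (x - t))"

definition ext0 :: "(real \<Rightarrow> complex) \<Rightarrow> real \<Rightarrow> complex" where
  "ext0 \<phi> = (\<lambda>x. if 0 \<le> x then \<phi> x else 0)"

text \<open>A closed ideal of the convolution algebra L^1(R), represented as a set of integrable
  functions (closed in the L^1 seminorm, hence saturated under a.e. equality).\<close>
definition closed_L1_ideal :: "(real \<Rightarrow> complex) set \<Rightarrow> bool" where
  "closed_L1_ideal I \<longleftrightarrow>
     I \<subseteq> {g. integrable lborel g} \<and>
     (\<lambda>x. 0) \<in> I \<and>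
     (\<forall>g\<in>I. \<forall>h\<in>I. (\<lambda>x. g x + h x) \<in> I) \<and>
     (\<forall>c::complex. \<forall>g\<in>I. (\<lambda>x. c * g x) \<in> I) \<and>
     (\<forall>g\<in>I. \<forall>u. integrable lborel u \<longrightarrow> conv_R g u \<in> I) \<and>
     (\<forall>h. integrable lborel h \<and>
          (\<forall>e>0. \<exists>g\<in>I. (LINT x|lborel. norm (h x - g x)) < e) \<longrightarrow> h \<in> I)"

definition gen_closed_L1_ideal :: "(real \<Rightarrow> complex) set \<Rightarrow> (real \<Rightarrow> complex) set" where
  "gen_closed_L1_ideal G = \<Inter>{I. closed_L1_ideal I \<and> G \<subseteq> I}"

definition Linf_Rplus :: "(real \<Rightarrow> complex) \<Rightarrow> bool" where
  "Linf_Rplus f \<longleftrightarrow> set_borel_measurable lborel {0..} f \<and>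
     (\<exists>B. AE x in lborel. 0 \<le> x \<longrightarrow> norm (f x) \<le> B)"

definition S_conv_lim :: "(real \<Rightarrow> complex) \<Rightarrow> (real \<Rightarrow> complex) \<Rightarrow> complex \<Rightarrow> bool" where
  "S_conv_lim \<phi> f \<alpha> \<longleftrightarrow>
     ((\<lambda>x. LINT t:{0..x}|lborel. f t * \<phi> (x - t)) \<longlongrightarrow> \<alpha>) at_top"

text \<open>K(f) = alpha: weak* convergence of the translates f(. + s) to the constant alpha
  in L^infinity(R_+) = L^1(R_+)^*, with the bilinear pairing.\<close>
definition K_lim :: "(real \<Rightarrow> complex) \<Rightarrow> complex \<Rightarrow> bool" where
  "K_lim f \<alpha> \<longleftrightarrow>
     (\<forall>g. set_integrable lborel {0..} g \<longrightarrow>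
        ((\<lambda>s. LINT t:{0..}|lborel. f (t + s) * g t) \<longlongrightarrow> \<alpha> * (LINT t:{0..}|lborel. g t)) at_top)"

end

theory Submission
  imports Defs
begin




lemma conv_integrand_integrable:
  fixes F h :: "real \<Rightarrow> complex"
  assumes F[measurable]: "F \<in> borel_measurable borel" and B: "\<And>y. norm (F y) \<le> B"
    and h: "integrable lborel h"
  shows "integrable lborel (\<lambda>y. F y * h (x - y))"
proof -
  have h'[measurable]: "h \<in> borel_measurable borel" using h by auto
  have i1: "integrable lborel (\<lambda>y. h (x + (-1) * y))"
    by (rule lborel_integrable_real_affine[OF h]) simp
  hence i2: "integrable lborel (\<lambda>y. B * norm (h (x - y)))" by simp
  show ?thesis
    apply (rule Bochner_Integration.integrable_bound[OF i2])
     apply measurable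
  proof (intro AE_I2)
    fix y
    have "norm (F y * h (x - y)) \<le> B * norm (h (x - y))"
      using B[of y] by (simp add: norm_mult mult_right_mono)
    also have "\<dots> \<le> norm (B * norm (h (x - y)))" by simp
    finally show "norm (F y * h (x - y)) \<le> norm (B * norm (h (x - y)))" .
  qed
qed


lemma integral_reflect:
  fixes h :: "real \<Rightarrow> 'a::{banach, second_countable_topology}"
  shows "(LINT y|lborel. h (x - y)) = (LINT y|lborel. h y)"
  using lborel_integral_real_affine[of "-1" h x] by simp

lemma integral_shift:
  fixes h :: "real \<Rightarrow> 'a::{banach, second_countable_topology}"
  shows "(LINT y|lborel. h (y + c)) = (LINT y|lborel. h y)"
  using lborel_integral_real_affine[of "1" h c] by (simp add: add.commute)

lemma integrable_reflect:
  fixes h :: "real \<Rightarrow> 'a::{banach, second_countable_topology}"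
  shows "integrable lborel (\<lambda>y. h (x - y)) \<longleftrightarrow> integrable lborel h"
  using lborel_integrable_real_affine_iff[where c="-1" and t=x and f=h] by simp

lemma integrable_shift:
  fixes h :: "real \<Rightarrow> 'a::{banach, second_countable_topology}"
  shows "integrable lborel (\<lambda>y. h (y + c)) \<longleftrightarrow> integrable lborel h"
  using lborel_integrable_real_affine_iff[where c=1 and t=c and f=h] by (simp add: add.commute)

lemma conv_comm: "conv_R a b x = conv_R b a x"
  unfolding conv_R_def using integral_reflect[of "\<lambda>t. a t * b (x - t)" x]
  by (simp add: mult.commute)

lemma conv_add:
  fixes F h h' :: "real \<Rightarrow> complex"
  assumes F[measurable]: "F \<in> borel_measurable borel" and B: "\<And>y. norm (F y) \<le> B"
    and h: "integrable lborel h" and h': "integrable lborel h'"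
  shows "conv_R F (\<lambda>y. h y + h' y) x = conv_R F h x + conv_R F h' x"
  unfolding conv_R_def
  using conv_integrand_integrable[OF F B h, of x] conv_integrand_integrable[OF F B h', of x]
  by (simp add: distrib_left)

lemma conv_scale:
  fixes F h :: "real \<Rightarrow> complex"
  shows "conv_R F (\<lambda>y. c * h y) x = c * conv_R F h x"
  unfolding conv_R_def
  by (subst mult.left_commute) (rule integral_mult_right_zero)

lemma conv_zero: "conv_R F (\<lambda>y. 0) x = 0"
  unfolding conv_R_def by simp

lemma conv_diff_bound:
  fixes F h h' :: "real \<Rightarrow> complex"
  assumes F[measurable]: "F \<in> borel_measurable borel" and B: "\<And>y. norm (F y) \<le> B"
    and h: "integrable lborel h" and h': "integrable lborel h'"
  shows "norm (conv_R F h x - conv_R F h' x) \<le> B * (LINT y|lborel. norm (h y - h' y))"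
proof -
  have d: "integrable lborel (\<lambda>y. h y - h' y)" using h h' by auto
  have "conv_R F h x - conv_R F h' x = (LINT y|lborel. F y * (h (x-y) - h' (x-y)))"
    unfolding conv_R_def
    using conv_integrand_integrable[OF F B h, of x] conv_integrand_integrable[OF F B h', of x]
    by (simp add: right_diff_distrib)
  also have "norm \<dots> \<le> (LINT y|lborel. norm (F y * (h (x-y) - h' (x-y))))"
    by (rule integral_norm_bound)
  also have "\<dots> \<le> (LINT y|lborel. B * norm (h (x-y) - h' (x-y)))"
  proof (rule integral_mono)
    show "integrable lborel (\<lambda>y. norm (F y * (h (x-y) - h' (x-y))))"
      using conv_integrand_integrable[OF F B d, of x] by simp
    show "integrable lborel (\<lambda>y. B * norm (h (x-y) - h' (x-y)))"
      using d integrable_reflect[of "\<lambda>y. h y - h' y" x] by simp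
    show "norm (F y * (h (x-y) - h' (x-y))) \<le> B * norm (h (x-y) - h' (x-y))" for y
      using B[of y] by (simp add: norm_mult mult_right_mono)
  qed
  also have "\<dots> = B * (LINT y|lborel. norm (h (x-y) - h' (x-y)))" by simp
  also have "(LINT y|lborel. norm (h (x-y) - h' (x-y))) = (LINT y|lborel. norm (h y - h' y))"
    using integral_reflect[of "\<lambda>y. norm (h y - h' y)" x] by simp
  finally show ?thesis .
qed

lemma integrable_conv:
  fixes a b :: "real \<Rightarrow> complex"
  assumes a: "integrable lborel a" and b: "integrable lborel b"
  shows "integrable lborel (conv_R a b)"
    and "(LINT x|lborel. conv_R a b x) = (LINT x|lborel. a x) * (LINT x|lborel. b x)"
proof -
  have [measurable]: "a \<in> borel_measurable borel" "b \<in> borel_measurable borel" using a b by auto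
  have int: "integrable (lborel \<Otimes>\<^sub>M lborel) (\<lambda>(t,x). a t * b (x - t))"
  proof (rule lborel_pair.Fubini_integrable)
    show "(\<lambda>(t,x). a t * b (x - t)) \<in> borel_measurable (lborel \<Otimes>\<^sub>M lborel)" by measurable
    have "(\<lambda>t. LINT x|lborel. norm (case (t, x) of (t, x) \<Rightarrow> a t * b (x - t)))
        = (\<lambda>t. norm (a t) * (LINT x|lborel. norm (b x)))"
    proof
      fix t
      have "(LINT x|lborel. norm (a t * b (x - t))) = norm (a t) * (LINT x|lborel. norm (b (x + (-t))))"
        by (simp add: norm_mult)
      also have "\<dots> = norm (a t) * (LINT x|lborel. norm (b x))"
        by (subst integral_shift) simp
      finally show "(LINT x|lborel. norm (case (t, x) of (t, x) \<Rightarrow> a t * b (x - t))) = norm (a t) * (LINT x|lborel. norm (b x))" by simp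
    qed
    then show "integrable lborel (\<lambda>t. LINT x|lborel. norm (case (t, x) of (t, x) \<Rightarrow> a t * b (x - t)))"
      using a by simp
    show "AE t in lborel. integrable lborel (\<lambda>x. case (t, x) of (t, x) \<Rightarrow> a t * b (x - t))"
    proof (rule AE_I2)
      fix t
      have "integrable lborel (\<lambda>x. b (x + (-t)))" using b integrable_shift[of b "-t"] by simp
      then show "integrable lborel (\<lambda>x. case (t, x) of (t, x) \<Rightarrow> a t * b (x - t))" by simp
    qed
  qed
  have "integrable lborel (\<lambda>x. LINT t|lborel. a t * b (x - t))"
    using lborel_pair.integrable_snd[of "\<lambda>t x. a t * b (x - t)"] int by simp
  then show "integrable lborel (conv_R a b)" unfolding conv_R_def by simp
  have "(LINT x|lborel. conv_R a b x) = (LINT t|lborel. (LINT x|lborel. a t * b (x - t)))"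
    unfolding conv_R_def using lborel_pair.Fubini_integral[of "\<lambda>t x. a t * b (x - t)"] int by simp
  also have "\<dots> = (LINT t|lborel. a t * (LINT x|lborel. b x))"
  proof (rule Bochner_Integration.integral_cong[OF refl])
    fix t
    have "(LINT x|lborel. a t * b (x - t)) = a t * (LINT x|lborel. b (x + (-t)))" by simp
    also have "\<dots> = a t * (LINT x|lborel. b x)" by (subst integral_shift) simp
    finally show "(LINT x|lborel. a t * b (x - t)) = a t * (LINT x|lborel. b x)" .
  qed
  also have "\<dots> = (LINT x|lborel. a x) * (LINT x|lborel. b x)" by simp
  finally show "(LINT x|lborel. conv_R a b x) = (LINT x|lborel. a x) * (LINT x|lborel. b x)" .
qed


lemma conv_norm_bound:
  fixes F h :: "real \<Rightarrow> complex"
  assumes F[measurable]: "F \<in> borel_measurable borel" and B: "\<And>y. norm (F y) \<le> B"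
    and h: "integrable lborel h"
  shows "(LINT y|lborel. norm (F y * h (x - y))) \<le> B * (LINT y|lborel. norm (h y))"
proof -
  have "(LINT y|lborel. norm (F y * h (x - y))) \<le> (LINT y|lborel. B * norm (h (x - y)))"
  proof (rule integral_mono)
    show "integrable lborel (\<lambda>y. norm (F y * h (x - y)))"
      using conv_integrand_integrable[OF F B h, of x] by simp
    show "integrable lborel (\<lambda>y. B * norm (h (x - y)))"
      using h integrable_reflect[of h x] by simp
    show "norm (F y * h (x - y)) \<le> B * norm (h (x - y))" for y
      using B[of y] by (simp add: norm_mult mult_right_mono)
  qed
  also have "\<dots> = B * (LINT y|lborel. norm (h (x - y)))" by simp
  also have "(LINT y|lborel. norm (h (x - y))) = (LINT y|lborel. norm (h y))"
    using integral_reflect[of "\<lambda>y. norm (h y)" x] by simp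
  finally show ?thesis .
qed

lemma conv_assoc:
  fixes F a b :: "real \<Rightarrow> complex"
  assumes F[measurable]: "F \<in> borel_measurable borel" and B: "\<And>y. norm (F y) \<le> B"
    and a: "integrable lborel a" and b: "integrable lborel b"
  shows "conv_R F (conv_R a b) x = (LINT t|lborel. a t * conv_R F b (x - t))"
proof -
  have [measurable]: "a \<in> borel_measurable borel" "b \<in> borel_measurable borel" using a b by auto
  define L where "L = (LINT y|lborel. norm (b y))"
  have int: "integrable (lborel \<Otimes>\<^sub>M lborel) (\<lambda>(t,y). a t * (F y * b (x - t - y)))"
  proof (rule lborel_pair.Fubini_integrable)
    show "(\<lambda>(t,y). a t * (F y * b (x - t - y))) \<in> borel_measurable (lborel \<Otimes>\<^sub>M lborel)" by measurable
    show "integrable lborel (\<lambda>t. LINT y|lborel. norm (case (t, y) of (t, y) \<Rightarrow> a t * (F y * b (x - t - y))))"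
    proof (rule Bochner_Integration.integrable_bound)
      show "integrable lborel (\<lambda>t. a t * (B * L))" using a by simp
      show "(\<lambda>t. LINT y|lborel. norm (case (t, y) of (t, y) \<Rightarrow> a t * (F y * b (x - t - y)))) \<in> borel_measurable lborel"
        by measurable
      show "AE t in lborel. norm (LINT y|lborel. norm (case (t, y) of (t, y) \<Rightarrow> a t * (F y * b (x - t - y))))
          \<le> norm (a t * (B * L))"
      proof (rule AE_I2)
        fix t
        have "(LINT y|lborel. norm (a t * (F y * b (x - t - y)))) = norm (a t) * (LINT y|lborel. norm (F y * b (x - t - y)))"
          by (simp add: norm_mult)
        also have "\<dots> \<le> norm (a t) * (B * L)"
          unfolding L_def by (rule mult_left_mono[OF conv_norm_bound[OF F B b]]) simp
        also have "\<dots> \<le> norm (a t * (B * L))"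
          by (simp add: norm_mult) (metis abs_ge_self abs_mult mult_left_mono norm_ge_zero)
        finally have "(LINT y|lborel. norm (a t * (F y * b (x - t - y)))) \<le> norm (a t * (B * L))" .
        moreover have "0 \<le> (LINT y|lborel. norm (a t * (F y * b (x - t - y))))" by simp
        ultimately show "norm (LINT y|lborel. norm (case (t, y) of (t, y) \<Rightarrow> a t * (F y * b (x - t - y))))
          \<le> norm (a t * (B * L))" by simp
      qed
    qed
    show "AE t in lborel. integrable lborel (\<lambda>y. case (t, y) of (t, y) \<Rightarrow> a t * (F y * b (x - t - y)))"
    proof (rule AE_I2)
      fix t
      show "integrable lborel (\<lambda>y. case (t, y) of (t, y) \<Rightarrow> a t * (F y * b (x - t - y)))"
        using conv_integrand_integrable[OF F B b, of "x - t"] by simp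
    qed
  qed
  have "conv_R F (conv_R a b) x = (LINT y|lborel. (LINT t|lborel. a t * (F y * b (x - t - y))))"
    unfolding conv_R_def
  proof (rule Bochner_Integration.integral_cong[OF refl])
    fix y
    have "F y * (LINT t|lborel. a t * b (x - y - t)) = (LINT t|lborel. F y * (a t * b (x - y - t)))"
      by (rule integral_mult_right_zero[symmetric])
    also have "\<dots> = (LINT t|lborel. a t * (F y * b (x - t - y)))"
      by (simp add: algebra_simps)
    finally show "F y * (LINT t|lborel. a t * b (x - y - t)) = (LINT t|lborel. a t * (F y * b (x - t - y)))" .
  qed
  also have "\<dots> = (LINT t|lborel. (LINT y|lborel. a t * (F y * b (x - t - y))))"
    using lborel_pair.Fubini_integral[of "\<lambda>t y. a t * (F y * b (x - t - y))"] int by simp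
  also have "\<dots> = (LINT t|lborel. a t * conv_R F b (x - t))"
    unfolding conv_R_def by (simp add: integral_mult_right_zero)
  finally show ?thesis .
qed




lemma filterlim_shift: "filterlim (\<lambda>x::real. x + c) at_top at_top"
  by (subst add.commute) (rule filterlim_tendsto_add_at_top[OF tendsto_const filterlim_ident])

lemma ext0_eq: "ext0 \<phi> = (\<lambda>x. indicator {0..} x *\<^sub>R \<phi> x)"
  unfolding ext0_def by (auto simp: indicator_def)

lemma ext0_integrable: "set_integrable lborel {0..} \<phi> \<Longrightarrow> integrable lborel (ext0 \<phi>)"
  unfolding ext0_eq set_integrable_def by simp

locale tauber_ctx =
  fixes f F :: "real \<Rightarrow> complex" and B :: real and \<alpha> :: complex
  assumes Fm[measurable]: "F \<in> borel_measurable borel"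
    and FB: "\<And>y. norm (F y) \<le> B"
    and Fneg: "\<And>y. y < 0 \<Longrightarrow> F y = 0"
    and f0m[measurable]: "(\<lambda>x. indicator {0..} x *\<^sub>R f x) \<in> borel_measurable borel"
    and AEf: "AE x in lborel. indicator {0..} x *\<^sub>R f x = F x"
begin

lemma S_rel:
  assumes phi: "set_integrable lborel {0..} \<phi>"
  shows "(LINT t:{0..x}|lborel. f t * \<phi> (x - t)) = conv_R F (ext0 \<phi>) x"
proof -
  have [measurable]: "ext0 \<phi> \<in> borel_measurable borel"
    using ext0_integrable[OF phi] by auto
  define f0 where "f0 = (\<lambda>x. indicator {0..} x *\<^sub>R f x)"
  have [measurable]: "f0 \<in> borel_measurable borel" unfolding f0_def by (rule f0m)
  have ae: "AE x in lborel. f0 x = F x" unfolding f0_def by (rule AEf)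
  have "(LINT t:{0..x}|lborel. f t * \<phi> (x - t))
      = (LINT t|lborel. indicator {0..x} t *\<^sub>R (f0 t * ext0 \<phi> (x - t)))"
    unfolding set_lebesgue_integral_def f0_def
    by (rule Bochner_Integration.integral_cong[OF refl]) (auto simp: indicator_def ext0_def)
  also have "\<dots> = (LINT t|lborel. indicator {0..x} t *\<^sub>R (F t * ext0 \<phi> (x - t)))"
  proof (rule integral_cong_AE)
    show "AE t in lborel. indicator {0..x} t *\<^sub>R (f0 t * ext0 \<phi> (x - t)) = indicator {0..x} t *\<^sub>R (F t * ext0 \<phi> (x - t))"
      using ae by eventually_elim simp
  qed measurable
  also have "\<dots> = conv_R F (ext0 \<phi>) x"
    unfolding conv_R_def
    by (rule Bochner_Integration.integral_cong[OF refl]) (auto simp: indicator_def ext0_def Fneg)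
  finally show ?thesis .
qed

lemma K_rel:
  assumes g: "set_integrable lborel {0..} g"
  defines "h \<equiv> (\<lambda>v. indicator {..0} v *\<^sub>R g (-v))"
  shows "integrable lborel h"
    and "(LINT x|lborel. h x) = (LINT t:{0..}|lborel. g t)"
    and "s \<ge> 0 \<Longrightarrow> (LINT t:{0..}|lborel. f (t + s) * g t) = conv_R F h s"
proof -
  define G where "G = (\<lambda>t. indicator {0..} t *\<^sub>R g t)"
  have Gi: "integrable lborel G" using g unfolding G_def set_integrable_def by simp
  have [measurable]: "G \<in> borel_measurable borel" using Gi by auto
  have hG: "h = (\<lambda>v. G (0 - v))"
    unfolding h_def G_def by (auto simp: indicator_def)
  show "integrable lborel h" unfolding hG using Gi integrable_reflect[of G 0] by simp
  show "(LINT x|lborel. h x) = (LINT t:{0..}|lborel. g t)"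
    unfolding hG set_lebesgue_integral_def using integral_reflect[of G 0] by (simp add: G_def)
  assume s: "s \<ge> 0"
  define f0 where "f0 = (\<lambda>x. indicator {0..} x *\<^sub>R f x)"
  have [measurable]: "f0 \<in> borel_measurable borel" unfolding f0_def by (rule f0m)
  have ae: "AE x in lborel. f0 x = F x" unfolding f0_def by (rule AEf)
  have "(LINT t:{0..}|lborel. f (t + s) * g t)
     = (LINT t|lborel. f0 (t + s) * G ((t + s) - s))"
    unfolding set_lebesgue_integral_def G_def f0_def
    by (rule Bochner_Integration.integral_cong[OF refl]) (use s in \<open>auto simp: indicator_def\<close>)
  also have "\<dots> = (LINT y|lborel. f0 y * G (y - s))"
    by (rule integral_shift[of "\<lambda>y. f0 y * G (y - s)"])
  also have "\<dots> = (LINT y|lborel. F y * G (y - s))"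
  proof (rule integral_cong_AE)
    show "AE y in lborel. f0 y * G (y - s) = F y * G (y - s)"
      using ae by eventually_elim simp
  qed measurable
  also have "\<dots> = conv_R F h s"
    unfolding conv_R_def hG by simp
  finally show "(LINT t:{0..}|lborel. f (t + s) * g t) = conv_R F h s" .
qed

definition good :: "(real \<Rightarrow> complex) \<Rightarrow> bool" where
  "good h \<longleftrightarrow> integrable lborel h \<and> ((conv_R F h) \<longlongrightarrow> \<alpha> * (LINT x|lborel. h x)) at_top"

lemma good_shift:
  assumes "good h" shows "good (\<lambda>y. h (y + c))"
proof -
  have h: "integrable lborel h" and lim: "((conv_R F h) \<longlongrightarrow> \<alpha> * (LINT x|lborel. h x)) at_top"
    using assms unfolding good_def by auto
  have eq: "conv_R F (\<lambda>y. h (y + c)) x = conv_R F h (x + c)" for x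
    unfolding conv_R_def by (simp add: diff_add_eq)
  have "((\<lambda>x. conv_R F h (x + c)) \<longlongrightarrow> \<alpha> * (LINT x|lborel. h x)) at_top"
    by (rule filterlim_compose[OF lim filterlim_shift])
  then show ?thesis
    unfolding good_def eq integral_shift using h integrable_shift[of h c] by simp
qed


lemma B0: "0 \<le> B" using FB[of 0] norm_ge_zero order_trans by blast

lemma conv_meas:
  assumes [measurable]: "g \<in> borel_measurable borel"
  shows "conv_R F g \<in> borel_measurable borel"
  unfolding conv_R_def by measurable

lemma good_zero: "good (\<lambda>x. 0)"
  unfolding good_def conv_R_def by simp

lemma good_add: assumes "good g" "good h" shows "good (\<lambda>x. g x + h x)"
proof -
  have g: "integrable lborel g" "((conv_R F g) \<longlongrightarrow> \<alpha> * (LINT x|lborel. g x)) at_top"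
    and h: "integrable lborel h" "((conv_R F h) \<longlongrightarrow> \<alpha> * (LINT x|lborel. h x)) at_top"
    using assms unfolding good_def by auto
  have "((\<lambda>x. conv_R F g x + conv_R F h x) \<longlongrightarrow> \<alpha> * (LINT x|lborel. g x) + \<alpha> * (LINT x|lborel. h x)) at_top"
    by (rule tendsto_add[OF g(2) h(2)])
  then show ?thesis
  proof -
    have e: "conv_R F (\<lambda>x. g x + h x) = (\<lambda>x. conv_R F g x + conv_R F h x)"
      by (rule ext) (rule conv_add[OF Fm FB g(1) h(1)])
    show ?thesis using g(1) h(1) \<open>((\<lambda>x. conv_R F g x + conv_R F h x) \<longlongrightarrow> _) at_top\<close>
      unfolding good_def e by (simp add: distrib_left)
  qed
qed

lemma good_scale: assumes "good g" shows "good (\<lambda>x. c * g x)"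
proof -
  have g: "integrable lborel g" "((conv_R F g) \<longlongrightarrow> \<alpha> * (LINT x|lborel. g x)) at_top"
    using assms unfolding good_def by auto
  have "((\<lambda>x. c * conv_R F g x) \<longlongrightarrow> c * (\<alpha> * (LINT x|lborel. g x))) at_top"
    by (rule tendsto_mult_left[OF g(2)])
  then show ?thesis
  proof -
    have e: "conv_R F (\<lambda>x. c * g x) = (\<lambda>x. c * conv_R F g x)"
      by (rule ext) (rule conv_scale)
    show ?thesis using g(1) \<open>((\<lambda>x. c * conv_R F g x) \<longlongrightarrow> _) at_top\<close>
      unfolding good_def e by (simp add: mult.left_commute)
  qed
qed

lemma good_closed:
  assumes h: "integrable lborel h"
    and approx: "\<And>e. e > 0 \<Longrightarrow> \<exists>g. good g \<and> (LINT x|lborel. norm (h x - g x)) < e"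
  shows "good h"
proof -
  have "((conv_R F h) \<longlongrightarrow> \<alpha> * (LINT x|lborel. h x)) at_top"
  proof (rule tendstoI)
    fix e :: real assume e: "e > 0"
    define C where "C = B + norm \<alpha> + 1"
    have C: "C > 0" unfolding C_def using B0 by (simp add: add_nonneg_pos)
    obtain g where g: "good g" and dl: "(LINT x|lborel. norm (h x - g x)) < e / (2*C)"
      using approx[of "e/(2*C)"] e C by auto
    have gi: "integrable lborel g" and gl: "((conv_R F g) \<longlongrightarrow> \<alpha> * (LINT x|lborel. g x)) at_top"
      using g unfolding good_def by auto
    define d where "d = (LINT x|lborel. norm (h x - g x))"
    have d0: "d \<ge> 0" unfolding d_def by simp
    have 2: "norm ((LINT x|lborel. h x) - (LINT x|lborel. g x)) \<le> d"
    proof -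
      have "(LINT x|lborel. h x) - (LINT x|lborel. g x) = (LINT x|lborel. h x - g x)"
        using h gi by simp
      also have "norm \<dots> \<le> d" unfolding d_def by (rule integral_norm_bound)
      finally show ?thesis .
    qed
    have Cd: "C * d < e / 2"
    proof -
      have "C * d < C * (e / (2*C))" using mult_strict_left_mono[OF dl C] unfolding d_def .
      also have "\<dots> = e / 2" using C by (simp add: field_simps)
      finally show ?thesis .
    qed
    have "eventually (\<lambda>x. dist (conv_R F g x) (\<alpha> * (LINT x|lborel. g x)) < e/2) at_top"
      using tendstoD[OF gl, of "e/2"] e by simp
    then show "eventually (\<lambda>x. dist (conv_R F h x) (\<alpha> * (LINT x|lborel. h x)) < e) at_top"
    proof eventually_elim
      case (elim x)
      have 1: "norm (conv_R F h x - conv_R F g x) \<le> B * d"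
        using conv_diff_bound[OF Fm FB h gi, of x] unfolding d_def .
      have 3: "norm (\<alpha> * ((LINT x|lborel. g x) - (LINT x|lborel. h x))) \<le> norm \<alpha> * d"
        using 2 by (simp add: norm_mult norm_minus_commute mult_left_mono)
      have "dist (conv_R F h x) (\<alpha> * (LINT x|lborel. h x))
          = norm ((conv_R F h x - conv_R F g x) + (conv_R F g x - \<alpha> * (LINT x|lborel. g x))
               + \<alpha> * ((LINT x|lborel. g x) - (LINT x|lborel. h x)))"
        by (simp add: dist_norm algebra_simps)
      also have "\<dots> \<le> norm (conv_R F h x - conv_R F g x) + norm (conv_R F g x - \<alpha> * (LINT x|lborel. g x))
               + norm (\<alpha> * ((LINT x|lborel. g x) - (LINT x|lborel. h x)))"
        by (rule order_trans[OF norm_triangle_ineq add_right_mono[OF norm_triangle_ineq]])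
      also have "\<dots> < B * d + e/2 + norm \<alpha> * d"
        using 1 3 elim by (simp add: dist_norm)
      also have "\<dots> = (B + norm \<alpha>) * d + e/2" by (simp add: algebra_simps)
      also have "\<dots> \<le> C * d + e/2" unfolding C_def using d0 by (simp add: algebra_simps)
      also have "\<dots> < e" using Cd by simp
      finally show ?case .
    qed
  qed
  then show ?thesis using h unfolding good_def by simp
qed

lemma good_conv:
  assumes g: "good g" and u: "integrable lborel u"
  shows "good (conv_R g u)"
proof -
  have gi: "integrable lborel g" and gl: "((conv_R F g) \<longlongrightarrow> \<alpha> * (LINT x|lborel. g x)) at_top"
    using g unfolding good_def by auto
  have [measurable]: "g \<in> borel_measurable borel" "u \<in> borel_measurable borel" using gi u by auto
  have cm[measurable]: "conv_R F g \<in> borel_measurable borel" by (rule conv_meas) simp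
  have comm: "conv_R g u = conv_R u g" by (rule ext) (rule conv_comm)
  define Lg where "Lg = (LINT y|lborel. norm (g y))"
  have bnd: "norm (conv_R F g z) \<le> B * Lg" for z
  proof -
    have "norm (conv_R F g z) \<le> (LINT y|lborel. norm (F y * g (z - y)))"
      unfolding conv_R_def by (rule integral_norm_bound)
    also have "\<dots> \<le> B * Lg" unfolding Lg_def by (rule conv_norm_bound[OF Fm FB gi])
    finally show ?thesis .
  qed
  have lim: "((\<lambda>x. LINT t|lborel. u t * conv_R F g (x - t)) \<longlongrightarrow> (LINT t|lborel. u t * (\<alpha> * (LINT x|lborel. g x)))) at_top"
  proof (rule integral_dominated_convergence_at_top[where w="\<lambda>t. norm (u t) * (B * Lg)"])
    show "(\<lambda>t. u t * (\<alpha> * (LINT x|lborel. g x))) \<in> borel_measurable lborel" by measurable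
    show "(\<lambda>t. u t * conv_R F g (x - t)) \<in> borel_measurable lborel" for x by measurable
    show "integrable lborel (\<lambda>t. norm (u t) * (B * Lg))" using u by simp
    show "AE t in lborel. ((\<lambda>x. u t * conv_R F g (x - t)) \<longlongrightarrow> u t * (\<alpha> * (LINT x|lborel. g x))) at_top"
    proof (rule AE_I2)
      fix t
      have "((\<lambda>x. conv_R F g (x + (-t))) \<longlongrightarrow> \<alpha> * (LINT x|lborel. g x)) at_top"
        by (rule filterlim_compose[OF gl filterlim_shift])
      then show "((\<lambda>x. u t * conv_R F g (x - t)) \<longlongrightarrow> u t * (\<alpha> * (LINT x|lborel. g x))) at_top"
        by (intro tendsto_mult_left) simp
    qed
    show "\<forall>\<^sub>F x in at_top. AE t in lborel. norm (u t * conv_R F g (x - t)) \<le> norm (u t) * (B * Lg)"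
      by (intro always_eventually allI AE_I2) (simp add: norm_mult mult_left_mono bnd)
  qed
  have ci: "integrable lborel (conv_R g u)" and ce: "(LINT x|lborel. conv_R g u x) = (LINT x|lborel. g x) * (LINT x|lborel. u x)"
    using integrable_conv[OF gi u] by auto
  have "((conv_R F (conv_R g u)) \<longlongrightarrow> \<alpha> * (LINT x|lborel. conv_R g u x)) at_top"
  proof -
    have e1: "conv_R F (conv_R g u) = (\<lambda>x. LINT t|lborel. u t * conv_R F g (x - t))"
      unfolding comm by (rule ext) (rule conv_assoc[OF Fm FB u gi])
    have e2: "(LINT t|lborel. u t * (\<alpha> * (LINT x|lborel. g x))) = \<alpha> * (LINT x|lborel. conv_R g u x)"
      unfolding ce by (simp add: mult.commute mult.left_commute)
    show ?thesis using lim unfolding e1 e2 .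
  qed
  then show ?thesis using ci unfolding good_def by simp
qed


lemma good_halfline:
  assumes K: "K_lim f \<alpha>" and h: "integrable lborel h" and hz: "\<And>v. v > 0 \<Longrightarrow> h v = 0"
  shows "good h"
proof -
  define g where "g = (\<lambda>t. h (- t))"
  have "(\<lambda>t. indicator {0..} t *\<^sub>R g t) = (\<lambda>t. h (0 - t))"
    unfolding g_def using hz by (auto simp: indicator_def)
  then have gi: "set_integrable lborel {0..} g"
    unfolding set_integrable_def using h integrable_reflect[of h 0] by simp
  have hh: "(\<lambda>v. indicator {..0} v *\<^sub>R g (-v)) = h"
    unfolding g_def using hz by (auto simp: indicator_def fun_eq_iff)
  note R = K_rel[OF gi, unfolded hh]
  have lim1: "((\<lambda>s. LINT t:{0..}|lborel. f (t + s) * g t) \<longlongrightarrow> \<alpha> * (LINT t:{0..}|lborel. g t)) at_top"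
    by (rule K[unfolded K_lim_def, rule_format, OF gi])
  have ev: "eventually (\<lambda>s. (LINT t:{0..}|lborel. f (t + s) * g t) = conv_R F h s) at_top"
    using eventually_ge_at_top[of "0::real"] by eventually_elim (rule R(3))
  have "((conv_R F h) \<longlongrightarrow> \<alpha> * (LINT t:{0..}|lborel. g t)) at_top"
    by (rule iffD1[OF tendsto_cong[OF ev] lim1])
  then show ?thesis unfolding good_def using h R(2) by simp
qed

lemma all_good_of_K:
  assumes K: "K_lim f \<alpha>" and h: "integrable lborel h"
  shows "good h"
proof (rule good_closed[OF h])
  have [measurable]: "h \<in> borel_measurable borel" using h by auto
  define hn where "hn = (\<lambda>n::nat. \<lambda>v. indicator {..real n} v *\<^sub>R h v)"
  have gn: "good (hn n)" for n
  proof -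
    have hni: "integrable lborel (hn n)" unfolding hn_def using h by (intro integrable_mult_indicator) auto
    have "good (\<lambda>y. hn n (y + real n))"
      by (rule good_halfline[OF K]) (use hni integrable_shift[of "hn n" "real n"] in \<open>auto simp: hn_def\<close>)
    from good_shift[OF this, of "- real n"] show ?thesis by simp
  qed
  have "(\<lambda>n. LINT v|lborel. norm (h v - hn n v)) \<longlonglongrightarrow> (LINT (v::real)|lborel. (0::real))"
  proof (rule Bochner_Integration.integral_dominated_convergence[where w="\<lambda>v. norm (h v)" and s="\<lambda>n v. norm (h v - hn n v)" and f="\<lambda>v. 0::real"])
    show "(\<lambda>v. 0::real) \<in> borel_measurable lborel" by simp
    show "(\<lambda>v. norm (h v - hn n v)) \<in> borel_measurable lborel" for n unfolding hn_def by measurable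
    show "integrable lborel (\<lambda>v. norm (h v))" using h by simp
    show "AE v in lborel. (\<lambda>n. norm (h v - hn n v)) \<longlonglongrightarrow> 0"
    proof (rule AE_I2)
      fix v
      obtain N :: nat where "v \<le> real N" using real_arch_simple by blast
      then have "eventually (\<lambda>n. norm (h v - hn n v) = 0) sequentially"
        unfolding eventually_sequentially hn_def
        by (intro exI[of _ N]) (auto simp: indicator_def intro: order_trans)
      then show "(\<lambda>n. norm (h v - hn n v)) \<longlonglongrightarrow> 0"
        by (rule tendsto_eventually)
    qed
    show "AE v in lborel. norm (norm (h v - hn n v)) \<le> norm (h v)" for n
      by (intro AE_I2) (auto simp: hn_def indicator_def)
  qed
  then have lim0: "(\<lambda>n. LINT v|lborel. norm (h v - hn n v)) \<longlonglongrightarrow> 0" by simp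
  fix e :: real assume e: "e > 0"
  obtain n where "(LINT v|lborel. norm (h v - hn n v)) < e"
    using order_tendstoD(2)[OF lim0 e] eventually_sequentially by auto
  then show "\<exists>g. good g \<and> (LINT x|lborel. norm (h x - g x)) < e" using gn by blast
qed

end

theorem corollary3p3:
  fixes k :: nat and \<phi> :: "nat \<Rightarrow> real \<Rightarrow> complex"
    and f :: "real \<Rightarrow> complex" and \<alpha> :: complex
  assumes L1: "\<And>i. i \<in> {1..k} \<Longrightarrow> set_integrable lborel {0..} (\<phi> i)"
    and norm1: "\<And>i. i \<in> {1..k} \<Longrightarrow> (LINT x:{0..}|lborel. \<phi> i x) = 1"
    and gen: "gen_closed_L1_ideal ((\<lambda>i. ext0 (\<phi> i)) ` {1..k}) = {g. integrable lborel g}"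
    and f: "Linf_Rplus f"
  shows "(\<forall>i\<in>{1..k}. S_conv_lim (\<phi> i) f \<alpha>) \<longleftrightarrow> K_lim f \<alpha>"
proof -
  define f0 where "f0 = (\<lambda>x. indicator {0..} x *\<^sub>R f x)"
  obtain B0 where fm: "f0 \<in> borel_measurable borel" and bd: "AE x in lborel. 0 \<le> x \<longrightarrow> norm (f x) \<le> B0"
    using f unfolding Linf_Rplus_def set_borel_measurable_def f0_def by auto
  have [measurable]: "f0 \<in> borel_measurable borel" by (rule fm)
  define B where "B = abs B0"
  define F where "F = (\<lambda>x. if norm (f0 x) \<le> B then f0 x else 0)"
  have Fm: "F \<in> borel_measurable borel" unfolding F_def by measurable
  have FB: "norm (F y) \<le> B" for y unfolding F_def B_def by auto
  have Fneg: "F y = 0" if "y < 0" for y using that unfolding F_def f0_def B_def by auto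
  have AEf: "AE x in lborel. f0 x = F x"
    using bd by eventually_elim (auto simp: F_def f0_def B_def indicator_def)
  interpret T: tauber_ctx f F B \<alpha>
    by unfold_locales (use Fm FB Fneg fm AEf in \<open>auto simp: f0_def\<close>)
  have ext_good: "T.good (ext0 (\<phi> i)) \<longleftrightarrow> S_conv_lim (\<phi> i) f \<alpha>" if i: "i \<in> {1..k}" for i
  proof -
    have int1: "(LINT x|lborel. ext0 (\<phi> i) x) = 1"
      using norm1[OF i] unfolding ext0_eq set_lebesgue_integral_def .
    have eq: "conv_R F (ext0 (\<phi> i)) = (\<lambda>x. LINT t:{0..x}|lborel. f t * \<phi> i (x - t))"
      by (rule ext) (rule T.S_rel[OF L1[OF i], symmetric])
    show ?thesis unfolding T.good_def S_conv_lim_def int1 eq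
      using ext0_integrable[OF L1[OF i]] by simp
  qed
  show ?thesis
  proof
    assume S: "\<forall>i\<in>{1..k}. S_conv_lim (\<phi> i) f \<alpha>"
    have J: "closed_L1_ideal {h. T.good h}"
      unfolding closed_L1_ideal_def
    proof (intro conjI allI ballI impI subsetI)
      show "x \<in> {g. integrable lborel g}" if "x \<in> {h. T.good h}" for x using that by (simp add: T.good_def)
      show "(\<lambda>x. 0) \<in> {h. T.good h}" using T.good_zero by simp
      show "(\<lambda>x. g x + h x) \<in> {h. T.good h}" if "g \<in> {h. T.good h}" "h \<in> {h. T.good h}" for g h
        using T.good_add that by simp
      show "(\<lambda>x. c * g x) \<in> {h. T.good h}" if "g \<in> {h. T.good h}" for c g
        using T.good_scale that by simp
      show "conv_R g u \<in> {h. T.good h}" if "g \<in> {h. T.good h}" "integrable lborel u" for g u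
        using T.good_conv that by simp
      show "h \<in> {h. T.good h}" if "integrable lborel h \<and> (\<forall>e>0. \<exists>g\<in>{h. T.good h}. (LINT x|lborel. norm (h x - g x)) < e)" for h
        using that T.good_closed[of h] by auto
    qed
    have "(\<lambda>i. ext0 (\<phi> i)) ` {1..k} \<subseteq> {h. T.good h}" using S ext_good by auto
    with J have "gen_closed_L1_ideal ((\<lambda>i. ext0 (\<phi> i)) ` {1..k}) \<subseteq> {h. T.good h}"
      unfolding gen_closed_L1_ideal_def by blast
    then have allg: "integrable lborel h \<Longrightarrow> T.good h" for h using gen by auto
    show "K_lim f \<alpha>" unfolding K_lim_def
    proof (intro allI impI)
      fix g :: "real \<Rightarrow> complex" assume gi: "set_integrable lborel {0..} g"
      define h where "h = (\<lambda>v. indicator {..0} v *\<^sub>R g (-v))"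
      note R = T.K_rel[OF gi, folded h_def]
      have lim1: "((conv_R F h) \<longlongrightarrow> \<alpha> * (LINT t:{0..}|lborel. g t)) at_top"
        using allg[OF R(1)] R(2) unfolding T.good_def by simp
      have ev: "eventually (\<lambda>s. conv_R F h s = (LINT t:{0..}|lborel. f (t + s) * g t)) at_top"
        using eventually_ge_at_top[of "0::real"] by eventually_elim (rule R(3)[symmetric])
      show "((\<lambda>s. LINT t:{0..}|lborel. f (t + s) * g t) \<longlongrightarrow> \<alpha> * (LINT t:{0..}|lborel. g t)) at_top"
        by (rule iffD1[OF tendsto_cong[OF ev] lim1])
    qed
  next
    assume K: "K_lim f \<alpha>"
    show "\<forall>i\<in>{1..k}. S_conv_lim (\<phi> i) f \<alpha>"
    proof
      fix i assume i: "i \<in> {1..k}"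
      show "S_conv_lim (\<phi> i) f \<alpha>"
        using ext_good[OF i] T.all_good_of_K[OF K ext0_integrable[OF L1[OF i]]] by simp
    qed
  qed
qed


end
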